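(* Let $\gamma>0$, $\alpha=2/\gamma^2$ and $n\ge0$. Then $\mathfrak{B}^\gamma_{RBF}[\psi_n^\alpha](z)=e_n^\gamma(z)$ for all $z\in\mathbb{C}$, and $\|\mathfrak{B}^\gamma_{RBF}[\psi_n^\alpha]\|_{\mathcal{H}_\gamma}=\|\psi_n^\alpha\|_{L^2(\mathbb{R})}=1$.
   Context: $\psi_n^\alpha(x)=\left(\frac{\alpha}{\pi}\right)^{1/4}(2^nn!)^{-1/2}H_n(\sqrt\alpha x)e^{-\alpha x^2/2}$ ($H_n$ physicists' Hermite polynomials), the $\alpha$-weighted normalized Hermite functions, an orthonormal basis of $L^2(\mathbb{R})$. $e_n^\gamma(z)=\sqrt{\frac{2^n}{\gamma^{2n}n!}}z^n\exp(-z^2/\gamma^2)$. $\mathcal{H}_\gamma$ is the Hilbert space of entire $f$ with $\|f\|^2=\frac{2}{\pi\gamma^2}\int_{\mathbb{C}}|f(z)|^2\exp\left(\frac{(z-\overline z)^2}{\gamma^2}\right)dA(z)<\infty$. The RBF Segal–Bargmann transform is $\mathfrak{B}^\gamma_{RBF}[\varphi](z)=\int_{\mathbb{R}}\mathcal{A}^\gamma_{RBF}(z,x)\varphi(x)dx$, where $\mathcal{A}^\gamma_{RBF}(z,x)=\sum_{m\ge0}e_m^\gamma(z)\psi_m^{2/\gamma^2}(x)$. *)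

theory Defs
  imports "HOL-Analysis.Analysis"
begin

fun hermite :: "nat \<Rightarrow> real \<Rightarrow> real" where
  "hermite 0 x = 1"
| "hermite (Suc 0) x = 2 * x"
| "hermite (Suc (Suc n)) x = 2 * x * hermite (Suc n) x - 2 * real (Suc n) * hermite n x"

definition hermite_fun :: "real \<Rightarrow> nat \<Rightarrow> real \<Rightarrow> real" where
  "hermite_fun \<alpha> n x = (\<alpha> / pi) powr (1/4) * (2 ^ n * fact n) powr (-1/2)
      * hermite n (sqrt \<alpha> * x) * exp (- \<alpha> * x\<^sup>2 / 2)"

definition e_fun :: "real \<Rightarrow> nat \<Rightarrow> complex \<Rightarrow> complex" where
  "e_fun \<gamma> n z = complex_of_real (sqrt (2 ^ n / (\<gamma> ^ (2 * n) * fact n)))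
      * z ^ n * exp (- z\<^sup>2 / complex_of_real (\<gamma>\<^sup>2))"

definition rbf_kernel :: "real \<Rightarrow> complex \<Rightarrow> real \<Rightarrow> complex" where
  "rbf_kernel \<gamma> z x = (\<Sum>m. e_fun \<gamma> m z * complex_of_real (hermite_fun (2 / \<gamma>\<^sup>2) m x))"

definition rbf_SB :: "real \<Rightarrow> (real \<Rightarrow> real) \<Rightarrow> complex \<Rightarrow> complex" where
  "rbf_SB \<gamma> \<phi> z = (LINT x|(lborel :: real measure). rbf_kernel \<gamma> z x * complex_of_real (\<phi> x))"

text \<open>Weight exp((z - conj z)^2 / gamma^2) (a real number, written via Re).\<close>
definition H_weight :: "real \<Rightarrow> complex \<Rightarrow> real" where
  "H_weight \<gamma> z = Re (exp ((z - cnj z)\<^sup>2 / complex_of_real (\<gamma>\<^sup>2)))"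

definition H_space :: "real \<Rightarrow> (complex \<Rightarrow> complex) set" where
  "H_space \<gamma> = {f. f holomorphic_on UNIV \<and>
      integrable (lborel :: complex measure) (\<lambda>z. (cmod (f z))\<^sup>2 * H_weight \<gamma> z)}"

definition H_norm :: "real \<Rightarrow> (complex \<Rightarrow> complex) \<Rightarrow> real" where
  "H_norm \<gamma> f = sqrt (2 / (pi * \<gamma>\<^sup>2)
      * (LINT z|(lborel :: complex measure). (cmod (f z))\<^sup>2 * H_weight \<gamma> z))"

definition L2_norm_real :: "(real \<Rightarrow> real) \<Rightarrow> real" where
  "L2_norm_real \<phi> = sqrt (LINT x|(lborel :: real measure). (\<phi> x)\<^sup>2)"

end

theory Submission
  imports Defs "HOL-Probability.Probability" "HOL-Real_Asymp.Real_Asymp"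
begin


lemma hermite_Suc: "hermite (Suc m) y = 2 * y * hermite m y - 2 * real m * hermite (m - 1) y"
  by (cases m) auto


lemma hermite_deriv_aux:
  "(\<forall>y. (hermite m has_real_derivative 2 * real m * hermite (m - 1) y) (at y)) \<and>
   (\<forall>y. (hermite (Suc m) has_real_derivative 2 * real (Suc m) * hermite m y) (at y))"
proof (induction m)
  case 0
  then show ?case by (auto intro!: derivative_eq_intros)
next
  case (Suc m)
  have "(hermite (Suc (Suc m)) has_real_derivative 2 * real (Suc (Suc m)) * hermite (Suc m) y) (at y)" for y
  proof -
    have eq: "hermite (Suc (Suc m)) = (\<lambda>y. 2 * y * hermite (Suc m) y - 2 * real (Suc m) * hermite m y)"
      by (rule ext) simp
    have "((\<lambda>y. 2 * y * hermite (Suc m) y - 2 * real (Suc m) * hermite m y) has_real_derivative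
       2 * hermite (Suc m) y + 2 * y * (2 * real (Suc m) * hermite m y) - 2 * real (Suc m) * (2 * real m * hermite (m - 1) y)) (at y)"
      using Suc.IH by (auto intro!: derivative_eq_intros)
    moreover have "2 * hermite (Suc m) y + 2 * y * (2 * real (Suc m) * hermite m y) - 2 * real (Suc m) * (2 * real m * hermite (m - 1) y)
       = 2 * real (Suc (Suc m)) * hermite (Suc m) y"
      by (simp only: hermite_Suc[of m y]) (simp add: algebra_simps)
    ultimately show ?thesis by (simp add: eq)
  qed
  then show ?case using Suc.IH by (simp del: hermite.simps)
qed

lemma hermite_deriv: "(hermite m has_real_derivative 2 * real m * hermite (m - 1) y) (at y)"
  using hermite_deriv_aux by blast

lemma hermite_deriv'[derivative_intros]:
  "(f has_real_derivative f') (at x within S) \<Longrightarrow>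
   ((\<lambda>x. hermite m (f x)) has_real_derivative (2 * real m * hermite (m - 1) (f x)) * f') (at x within S)"
  using DERIV_chain2[OF hermite_deriv] by blast

lemma hermite_cont: "continuous_on UNIV (hermite m)"
  by (metis continuous_at_imp_continuous_on DERIV_isCont hermite_deriv)

lemma hermite_cont'[continuous_intros]: "continuous_on S f \<Longrightarrow> continuous_on S (\<lambda>x. hermite m (f x))"
  using continuous_on_compose2[OF hermite_cont] by blast

lemma hermite_meas[measurable]: "hermite m \<in> borel_measurable borel"
  using hermite_cont by (rule borel_measurable_continuous_onI)

lemma abs_le_exp: assumes "c > 0" shows "2 * \<bar>y\<bar> \<le> exp (c * y\<^sup>2) / sqrt c"
proof -
  have "2 * sqrt c * \<bar>y\<bar> \<le> 1 + c * y\<^sup>2"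
  proof -
    have "0 \<le> (sqrt c * \<bar>y\<bar> - 1)\<^sup>2" by simp
    also have "\<dots> = c * y\<^sup>2 - 2 * sqrt c * \<bar>y\<bar> + 1" using assms
      by (simp add: power2_eq_square algebra_simps)
    finally show ?thesis by simp
  qed
  also have "\<dots> \<le> exp (c * y\<^sup>2)" by (rule exp_ge_add_one_self)
  finally show ?thesis using assms by (simp add: field_simps)
qed

lemma hermite_bound_aux:
  "(\<forall>d>0. \<exists>K. \<forall>y. \<bar>hermite m y\<bar> \<le> K * exp (d * y\<^sup>2)) \<and>
   (\<forall>d>0. \<exists>K. \<forall>y. \<bar>hermite (Suc m) y\<bar> \<le> K * exp (d * y\<^sup>2))"
proof (induction m)
  case 0
  have "\<forall>d>0. \<exists>K. \<forall>y::real. \<bar>2 * y\<bar> \<le> K * exp (d * y\<^sup>2)"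
  proof (intro allI impI)
    fix d :: real assume "d > 0"
    show "\<exists>K. \<forall>y::real. \<bar>2 * y\<bar> \<le> K * exp (d * y\<^sup>2)"
      by (rule exI[of _ "1 / sqrt d"]) (use abs_le_exp[OF \<open>d > 0\<close>] in \<open>auto simp: abs_mult\<close>)
  qed
  then show ?case by (auto intro: exI[of _ 1])
next
  case (Suc m)
  have "\<exists>K. \<forall>y. \<bar>hermite (Suc (Suc m)) y\<bar> \<le> K * exp (d * y\<^sup>2)" if d: "d > 0" for d
  proof -
    obtain K1 where K1: "\<And>y. \<bar>hermite (Suc m) y\<bar> \<le> K1 * exp (d / 2 * y\<^sup>2)"
      using Suc.IH d by (meson half_gt_zero)
    obtain K0 where K0: "\<And>y. \<bar>hermite m y\<bar> \<le> K0 * exp (d * y\<^sup>2)"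
      using Suc.IH d by meson
    have "\<bar>hermite (Suc (Suc m)) y\<bar> \<le> (K1 / sqrt (d/2) + 2 * real (Suc m) * K0) * exp (d * y\<^sup>2)" for y
    proof -
      have "\<bar>hermite (Suc (Suc m)) y\<bar> \<le> 2 * \<bar>y\<bar> * \<bar>hermite (Suc m) y\<bar> + 2 * real (Suc m) * \<bar>hermite m y\<bar>"
      proof -
        have e: "hermite (Suc (Suc m)) y = 2*y*hermite (Suc m) y - 2*real(Suc m)*hermite m y" by simp
        show ?thesis unfolding e by (rule order_trans[OF abs_triangle_ineq4]) (simp add: abs_mult)
      qed
      also have "\<dots> \<le> (exp (d/2 * y\<^sup>2) / sqrt (d/2)) * (K1 * exp (d / 2 * y\<^sup>2)) + 2 * real (Suc m) * (K0 * exp (d * y\<^sup>2))"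
        apply (intro add_mono mult_mono abs_le_exp K1 mult_left_mono K0)
        using d by auto
      also have "exp (d/2 * y\<^sup>2) * exp (d / 2 * y\<^sup>2) = exp (d * y\<^sup>2)"
        by (simp flip: exp_add)
      then have "(exp (d/2 * y\<^sup>2) / sqrt (d/2)) * (K1 * exp (d / 2 * y\<^sup>2)) = K1 / sqrt (d/2) * exp (d * y\<^sup>2)"
        by (simp add: field_simps)
      finally show ?thesis by (simp add: algebra_simps)
    qed
    then show ?thesis by blast
  qed
  then show ?case using Suc.IH by blast
qed

lemma hermite_bound: "d > 0 \<Longrightarrow> \<exists>K. \<forall>y. \<bar>hermite m y\<bar> \<le> K * exp (d * y\<^sup>2)"
  using hermite_bound_aux by blast



lemma gauss_hbi: assumes "c > 0"
  shows "has_bochner_integral lborel (\<lambda>y::real. exp (- c * y\<^sup>2)) (sqrt (pi / c))"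
proof -
  define \<sigma> where "\<sigma> = 1 / sqrt (2 * c)"
  have s: "\<sigma> > 0" "\<sigma>\<^sup>2 = 1 / (2 * c)" using assms by (auto simp: \<sigma>_def power_divide)
  have "has_bochner_integral lborel (\<lambda>y. sqrt (pi / c) * normal_density 0 \<sigma> y) (sqrt (pi / c) * 1)"
  proof (intro has_bochner_integral_mult_right)
    show "has_bochner_integral lborel (normal_density 0 \<sigma>) 1"
      using integrable_normal_density[where \<sigma>=\<sigma> and \<mu>=0] integral_normal_density[where \<sigma>=\<sigma> and \<mu>=0] s(1)
      by (simp add: has_bochner_integral_iff)
  qed
  moreover have "sqrt (pi / c) * normal_density 0 \<sigma> y = exp (- c * y\<^sup>2)" for y
  proof -
    have "normal_density 0 \<sigma> y = 1 / sqrt (pi / c) * exp (- (c * y\<^sup>2))"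
      unfolding normal_density_def s(2) using assms by (simp add: field_simps)
    then show ?thesis using assms by simp
  qed
  ultimately show ?thesis by simp
qed

lemma gauss_integrable: "c > 0 \<Longrightarrow> integrable lborel (\<lambda>y::real. exp (- c * y\<^sup>2))"
  using gauss_hbi has_bochner_integral_iff by blast

lemma gauss_integral: "c > 0 \<Longrightarrow> integral\<^sup>L lborel (\<lambda>y::real. exp (- c * y\<^sup>2)) = sqrt (pi / c)"
  using gauss_hbi has_bochner_integral_iff by blast

lemma herm_prod_bound: "\<exists>K. \<forall>y. \<bar>hermite m y * hermite n y * exp (- y\<^sup>2)\<bar> \<le> K * exp (- (1/2) * y\<^sup>2)"
proof -
  obtain K1 where K1: "\<And>y. \<bar>hermite m y\<bar> \<le> K1 * exp (1/4 * y\<^sup>2)"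
    using hermite_bound[of "1/4" m] by auto
  obtain K2 where K2: "\<And>y. \<bar>hermite n y\<bar> \<le> K2 * exp (1/4 * y\<^sup>2)"
    using hermite_bound[of "1/4" n] by auto
  have "\<bar>hermite m y * hermite n y * exp (- y\<^sup>2)\<bar> \<le> (K1 * K2) * exp (- (1/2) * y\<^sup>2)" for y
  proof -
    have "\<bar>hermite m y * hermite n y * exp (- y\<^sup>2)\<bar> = \<bar>hermite m y\<bar> * \<bar>hermite n y\<bar> * exp (- y\<^sup>2)"
      by (simp add: abs_mult)
    also have "\<dots> \<le> (K1 * exp (1/4 * y\<^sup>2)) * (K2 * exp (1/4 * y\<^sup>2)) * exp (- y\<^sup>2)"
      by (intro mult_right_mono mult_mono K1 K2) (use order_trans[OF abs_ge_zero K1[of 0]] in auto)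
    also have "\<dots> = (K1 * K2) * (exp (1/4 * y\<^sup>2) * exp (1/4 * y\<^sup>2) * exp (- y\<^sup>2))"
      by (simp add: algebra_simps)
    also have "exp (1/4 * y\<^sup>2) * exp (1/4 * y\<^sup>2) * exp (- y\<^sup>2) = exp (- (1/2) * y\<^sup>2)"
      by (simp flip: exp_add)
    finally show ?thesis .
  qed
  then show ?thesis by blast
qed

lemma herm_prod_integrable: "integrable lborel (\<lambda>y. hermite m y * hermite n y * exp (- y\<^sup>2))"
proof -
  obtain K where K: "\<And>y. \<bar>hermite m y * hermite n y * exp (- y\<^sup>2)\<bar> \<le> K * exp (- (1/2) * y\<^sup>2)"
    using herm_prod_bound by blast
  show ?thesis
  proof (rule Bochner_Integration.integrable_bound)
    show "integrable lborel (\<lambda>y. K * exp (- (1/2) * y\<^sup>2))"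
      using gauss_integrable[of "1/2"] by auto
    show "AE x in lborel. norm (hermite m x * hermite n x * exp (- x\<^sup>2)) \<le> norm (K * exp (- (1/2) * x\<^sup>2))"
      using K by (auto intro: order_trans[OF _ abs_ge_self])
  qed measurable
qed

lemma herm_prod_tendsto:
  "((\<lambda>y. hermite m y * hermite n y * exp (- y\<^sup>2)) \<longlongrightarrow> 0) at_top"
  "((\<lambda>y. hermite m y * hermite n y * exp (- y\<^sup>2)) \<longlongrightarrow> 0) at_bot"
proof -
  obtain K where K: "\<And>y. \<bar>hermite m y * hermite n y * exp (- y\<^sup>2)\<bar> \<le> K * exp (- (1/2) * y\<^sup>2)"
    using herm_prod_bound by blast
  have t1: "((\<lambda>y::real. K * exp (- (1/2) * y\<^sup>2)) \<longlongrightarrow> 0) at_top" by real_asymp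
  have t2: "((\<lambda>y::real. K * exp (- (1/2) * y\<^sup>2)) \<longlongrightarrow> 0) at_bot" by real_asymp
  show "((\<lambda>y. hermite m y * hermite n y * exp (- y\<^sup>2)) \<longlongrightarrow> 0) at_top"
    by (rule Lim_null_comparison[OF _ t1]) (use K in auto)
  show "((\<lambda>y. hermite m y * hermite n y * exp (- y\<^sup>2)) \<longlongrightarrow> 0) at_bot"
    by (rule Lim_null_comparison[OF _ t2]) (use K in auto)
qed

lemma FTC_line:
  fixes F f :: "real \<Rightarrow> real"
  assumes "\<And>x. (F has_real_derivative f x) (at x)" "continuous_on UNIV f" "integrable lborel f"
    "(F \<longlongrightarrow> 0) at_top" "(F \<longlongrightarrow> 0) at_bot"
  shows "integral\<^sup>L lborel f = 0"
proof -
  have "(LBINT x=-\<infinity>..\<infinity>. f x) = 0 - 0"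
  proof (rule interval_integral_FTC_integrable)
    show "(F has_vector_derivative f x) (at x)" for x
      using assms(1) has_real_derivative_iff_has_vector_derivative by blast
    show "isCont f x" for x using assms(2) by (simp add: continuous_on_eq_continuous_at)
    show "set_integrable lborel (einterval (- \<infinity>) \<infinity>) f"
      using assms(3) by (simp add: set_integrable_def)
    show "((F \<circ> real_of_ereal) \<longlongrightarrow> 0) (at_right (- \<infinity>))"
      using assms(5) by (simp add: ereal_tendsto_simps)
    show "((F \<circ> real_of_ereal) \<longlongrightarrow> 0) (at_left \<infinity>)"
      using assms(4) by (simp add: ereal_tendsto_simps)
  qed auto
  then show ?thesis
    by (simp add: interval_lebesgue_integral_def set_lebesgue_integral_def)
qed



lemma I_rec: "integral\<^sup>L lborel (\<lambda>y. hermite m y * hermite (Suc n) y * exp (- y\<^sup>2)) =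
  2 * real m * integral\<^sup>L lborel (\<lambda>y. hermite (m - 1) y * hermite n y * exp (- y\<^sup>2))"
proof -
  define f where "f y = 2 * real m * (hermite (m - 1) y * hermite n y * exp (- y\<^sup>2)) - hermite m y * hermite (Suc n) y * exp (- y\<^sup>2)" for y
  have "integral\<^sup>L lborel f = 0"
  proof (rule FTC_line[where F = "\<lambda>y. hermite m y * hermite n y * exp (- y\<^sup>2)"])
    show "((\<lambda>y. hermite m y * hermite n y * exp (- y\<^sup>2)) has_real_derivative f x) (at x)" for x
    proof -
      have "((\<lambda>y. hermite m y * hermite n y * exp (- y\<^sup>2)) has_real_derivative
        2 * real m * hermite (m - 1) x * 1 * hermite n x * exp (- x\<^sup>2) +
        hermite m x * (2 * real n * hermite (n - 1) x * 1) * exp (- x\<^sup>2) +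
        hermite m x * hermite n x * (exp (- x\<^sup>2) * (- (2 * x)))) (at x)"
        by (auto intro!: derivative_eq_intros simp: algebra_simps)
      moreover have "2 * real m * hermite (m - 1) x * 1 * hermite n x * exp (- x\<^sup>2) +
        hermite m x * (2 * real n * hermite (n - 1) x * 1) * exp (- x\<^sup>2) +
        hermite m x * hermite n x * (exp (- x\<^sup>2) * (- (2 * x))) = f x"
        unfolding f_def by (simp only: hermite_Suc[of n x]) (simp add: algebra_simps)
      ultimately show ?thesis by simp
    qed
    show "continuous_on UNIV f" unfolding f_def by (intro continuous_intros)
    show "integrable lborel f" unfolding f_def
      by (intro Bochner_Integration.integrable_diff Bochner_Integration.integrable_mult_right herm_prod_integrable)
    show "((\<lambda>y. hermite m y * hermite n y * exp (- y\<^sup>2)) \<longlongrightarrow> 0) at_top"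
      by (rule herm_prod_tendsto)
    show "((\<lambda>y. hermite m y * hermite n y * exp (- y\<^sup>2)) \<longlongrightarrow> 0) at_bot"
      by (rule herm_prod_tendsto)
  qed
  moreover have "integral\<^sup>L lborel f = 2 * real m * integral\<^sup>L lborel (\<lambda>y. hermite (m - 1) y * hermite n y * exp (- y\<^sup>2))
      - integral\<^sup>L lborel (\<lambda>y. hermite m y * hermite (Suc n) y * exp (- y\<^sup>2))"
    unfolding f_def
    by (subst Bochner_Integration.integral_diff) (auto intro!: Bochner_Integration.integrable_mult_right herm_prod_integrable)
  ultimately show ?thesis by simp
qed

lemma I_val: "integral\<^sup>L lborel (\<lambda>y. hermite m y * hermite n y * exp (- y\<^sup>2)) =
  (if m = n then 2 ^ n * fact n * sqrt pi else 0)"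
proof (induction n arbitrary: m)
  case 0
  show ?case
  proof (cases m)
    case 0
    then show ?thesis using gauss_integral[of 1] by simp
  next
    case (Suc k)
    have "integral\<^sup>L lborel (\<lambda>y. hermite m y * hermite 0 y * exp (- y\<^sup>2)) =
          integral\<^sup>L lborel (\<lambda>y. hermite 0 y * hermite (Suc k) y * exp (- y\<^sup>2))"
      by (simp add: Suc mult.commute)
    also have "\<dots> = 0" by (subst I_rec) simp
    finally show ?thesis using Suc by simp
  qed
next
  case (Suc n)
  show ?case
  proof (cases m)
    case 0
    then show ?thesis by (subst I_rec) simp
  next
    case (Suc k)
    show ?thesis unfolding Suc by (subst I_rec) (simp add: Suc.IH)
  qed
qed



lemma hermite_fun_meas[measurable]: "hermite_fun \<alpha> m \<in> borel_measurable borel"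
  unfolding hermite_fun_def[abs_def] by measurable

lemma hermite_fun_cont: "continuous_on UNIV (hermite_fun \<alpha> m)"
  unfolding hermite_fun_def[abs_def] by (intro continuous_intros) auto

lemma psi_prod:
  assumes "\<alpha> > 0"
  shows "hermite_fun \<alpha> m x * hermite_fun \<alpha> n x =
    ((\<alpha> / pi) powr (1/2) * (2 ^ m * fact m) powr (-1/2) * (2 ^ n * fact n) powr (-1/2)) *
    (hermite m (sqrt \<alpha> * x) * hermite n (sqrt \<alpha> * x) * exp (- (sqrt \<alpha> * x)\<^sup>2))"
proof -
  have a: "(\<alpha> / pi) powr (1/4) * (\<alpha> / pi) powr (1/4) = (\<alpha> / pi) powr (1/2)"
    by (simp flip: powr_add)
  have e: "exp (- \<alpha> * x\<^sup>2 / 2) * exp (- \<alpha> * x\<^sup>2 / 2) = exp (- (sqrt \<alpha> * x)\<^sup>2)"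
    using assms by (simp flip: exp_add add: power_mult_distrib)
  show ?thesis unfolding hermite_fun_def
    using a e by (simp add: algebra_simps)
qed

lemma psi_prod_integrable:
  assumes "\<alpha> > 0"
  shows "integrable lborel (\<lambda>x. hermite_fun \<alpha> m x * hermite_fun \<alpha> n x)"
proof -
  have "integrable lborel (\<lambda>x. hermite m (0 + sqrt \<alpha> * x) * hermite n (0 + sqrt \<alpha> * x) * exp (- (0 + sqrt \<alpha> * x)\<^sup>2))"
    using assms by (subst lborel_integrable_real_affine_iff[where f = "\<lambda>y. hermite m y * hermite n y * exp (- y\<^sup>2)"])
       (auto intro: herm_prod_integrable)
  then show ?thesis unfolding psi_prod[OF assms] by simp
qed

lemma psi_orth:
  assumes "\<alpha> > 0"
  shows "integral\<^sup>L lborel (\<lambda>x. hermite_fun \<alpha> m x * hermite_fun \<alpha> n x) = (if m = n then 1 else 0)"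
proof -
  define G where "G y = hermite m y * hermite n y * exp (- y\<^sup>2)" for y
  have sa: "sqrt \<alpha> > 0" using assms by simp
  have "integral\<^sup>L lborel G = sqrt \<alpha> * integral\<^sup>L lborel (\<lambda>x. G (0 + sqrt \<alpha> * x))"
    using lborel_integral_real_affine[of "sqrt \<alpha>" G 0] sa by simp
  then have iG: "integral\<^sup>L lborel (\<lambda>x. G (sqrt \<alpha> * x)) = (if m = n then 2 ^ n * fact n * sqrt pi else 0) / sqrt \<alpha>"
    using sa I_val[of m n] unfolding G_def by (simp add: field_simps)
  have "integral\<^sup>L lborel (\<lambda>x. hermite_fun \<alpha> m x * hermite_fun \<alpha> n x) =
     ((\<alpha> / pi) powr (1/2) * (2 ^ m * fact m) powr (-1/2) * (2 ^ n * fact n) powr (-1/2)) *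
      integral\<^sup>L lborel (\<lambda>x. G (sqrt \<alpha> * x))"
    unfolding psi_prod[OF assms] G_def by simp
  also have "\<dots> = (if m = n then 1 else 0)"
  proof (cases "m = n")
    case True
    have p: "(2 ^ n * fact n :: real) powr (-1/2) * (2 ^ n * fact n) powr (-1/2) = 1 / (2 ^ n * fact n)"
      by (simp flip: powr_add add: powr_minus_divide)
    have q: "(\<alpha> / pi) powr (1/2) = sqrt \<alpha> / sqrt pi"
      using assms by (simp add: powr_half_sqrt real_sqrt_divide)
    have r: "(\<alpha> / pi) powr (1/2) * (2 ^ m * fact m) powr (-1/2) * (2 ^ n * fact n) powr (-1/2)
       = sqrt \<alpha> / sqrt pi * (1 / (2 ^ n * fact n))"
      using p q True by (simp add: mult.assoc)
    have "sqrt \<alpha> / sqrt pi * (1 / (2 ^ n * fact n)) * ((2 ^ n * fact n * sqrt pi) / sqrt \<alpha>) = 1"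
      using sa by (simp add: field_simps)
    then show ?thesis unfolding r using True iG by simp
  qed (simp add: iG)
  finally show ?thesis .
qed

lemma psi_sq_integrable: "\<alpha> > 0 \<Longrightarrow> integrable lborel (\<lambda>x. (hermite_fun \<alpha> m x)\<^sup>2)"
  using psi_prod_integrable[of \<alpha> m m] by (simp add: power2_eq_square)

lemma psi_norm: "\<alpha> > 0 \<Longrightarrow> integral\<^sup>L lborel (\<lambda>x. (hermite_fun \<alpha> m x)\<^sup>2) = 1"
  using psi_orth[of \<alpha> m m] by (simp add: power2_eq_square)



lemma sqrt_amgm: "0 \<le> a \<Longrightarrow> 0 \<le> b \<Longrightarrow> sqrt (a * b) \<le> (a + b) / 2"
proof -
  assume a: "0 \<le> a" and b: "0 \<le> b"
  have "0 \<le> (sqrt a - sqrt b)\<^sup>2" by simp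
  also have "\<dots> = a + b - 2 * sqrt (a * b)" using a b
    by (simp add: power2_eq_square algebra_simps real_sqrt_mult)
  finally show ?thesis by simp
qed

lemma norm_e_fun:
  "norm (e_fun \<gamma> m z) = sqrt ((2 * (cmod z)\<^sup>2 / \<gamma>\<^sup>2) ^ m / fact m) * norm (exp (- z\<^sup>2 / complex_of_real (\<gamma>\<^sup>2)))"
proof -
  have "norm (e_fun \<gamma> m z) = sqrt (2 ^ m / (\<gamma> ^ (2 * m) * fact m)) * cmod z ^ m * norm (exp (- z\<^sup>2 / complex_of_real (\<gamma>\<^sup>2)))"
    unfolding e_fun_def by (simp add: norm_mult norm_power)
  also have "sqrt (2 ^ m / (\<gamma> ^ (2 * m) * fact m)) * cmod z ^ m = sqrt ((2 * (cmod z)\<^sup>2 / \<gamma>\<^sup>2) ^ m / fact m)"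
  proof -
    have "(cmod z ^ 2) ^ m = (cmod z ^ m) ^ 2" by (metis power_mult mult.commute)
    then have "cmod z ^ m = sqrt ((cmod z ^ 2) ^ m)"
      by simp
    then have "sqrt (2 ^ m / (\<gamma> ^ (2 * m) * fact m)) * cmod z ^ m = sqrt (2 ^ m / (\<gamma> ^ (2 * m) * fact m) * (cmod z ^ 2) ^ m)"
      by (simp only: real_sqrt_mult)
    also have "2 ^ m / (\<gamma> ^ (2 * m) * fact m) * (cmod z ^ 2) ^ m = (2 * (cmod z)\<^sup>2 / \<gamma>\<^sup>2) ^ m / fact m"
      by (simp add: power_mult_distrib power_divide field_simps flip: power_mult)
    finally show ?thesis .
  qed
  finally show ?thesis .
qed

lemma summable_norm_e_fun: "summable (\<lambda>m. norm (e_fun \<gamma> m z))"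
proof -
  define u where "u = 2 * (cmod z)\<^sup>2 / \<gamma>\<^sup>2"
  define E where "E = norm (exp (- z\<^sup>2 / complex_of_real (\<gamma>\<^sup>2)))"
  have u: "u \<ge> 0" unfolding u_def by simp
  have bnd: "norm (norm (e_fun \<gamma> m z)) \<le> E * ((inverse (fact m) * (2 * u) ^ m + (1/2) ^ m) / 2)" for m
  proof -
    have "sqrt (u ^ m / fact m) = sqrt ((inverse (fact m) * (2 * u) ^ m) * (1/2) ^ m)"
      by (simp add: power_mult_distrib field_simps)
    also have "\<dots> \<le> (inverse (fact m) * (2 * u) ^ m + (1/2) ^ m) / 2"
      using u by (intro sqrt_amgm) auto
    finally have h: "sqrt (u ^ m / fact m) \<le> (inverse (fact m) * (2 * u) ^ m + (1/2) ^ m) / 2" .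
    have E0: "E \<ge> 0" unfolding E_def by simp
    have "norm (norm (e_fun \<gamma> m z)) = sqrt (u ^ m / fact m) * E"
      unfolding norm_e_fun u_def[symmetric] E_def[symmetric] using E0 u by (simp add: abs_mult)
    then show ?thesis using mult_left_mono[OF h E0] E0 u by (simp add: mult.commute abs_mult)
  qed
  have "summable (\<lambda>m. E * ((inverse (fact m) * (2 * u) ^ m + (1/2) ^ m) / 2))"
    by (intro summable_mult summable_divide summable_add summable_exp summable_geometric) auto
  then show ?thesis
    by (rule summable_comparison_test[rotated]) (use bnd in auto)
qed

lemma abs_psi_prod_int:
  assumes "\<alpha> > 0"
  shows "integrable lborel (\<lambda>x. \<bar>hermite_fun \<alpha> m x * hermite_fun \<alpha> n x\<bar>)"
    "integral\<^sup>L lborel (\<lambda>x. \<bar>hermite_fun \<alpha> m x * hermite_fun \<alpha> n x\<bar>) \<le> 1"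
proof -
  show i: "integrable lborel (\<lambda>x. \<bar>hermite_fun \<alpha> m x * hermite_fun \<alpha> n x\<bar>)"
    using psi_prod_integrable[OF assms] by (rule integrable_abs)
  have "integral\<^sup>L lborel (\<lambda>x. \<bar>hermite_fun \<alpha> m x * hermite_fun \<alpha> n x\<bar>) \<le>
        integral\<^sup>L lborel (\<lambda>x. ((hermite_fun \<alpha> m x)\<^sup>2 + (hermite_fun \<alpha> n x)\<^sup>2) / 2)"
  proof (rule integral_mono[OF i])
    show "integrable lborel (\<lambda>x. ((hermite_fun \<alpha> m x)\<^sup>2 + (hermite_fun \<alpha> n x)\<^sup>2) / 2)"
      using assms by (intro integrable_divide Bochner_Integration.integrable_add psi_sq_integrable)
    show "\<bar>hermite_fun \<alpha> m x * hermite_fun \<alpha> n x\<bar> \<le> ((hermite_fun \<alpha> m x)\<^sup>2 + (hermite_fun \<alpha> n x)\<^sup>2) / 2" for x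
    proof -
      have "0 \<le> (\<bar>hermite_fun \<alpha> m x\<bar> - \<bar>hermite_fun \<alpha> n x\<bar>)\<^sup>2" by simp
      then show ?thesis by (simp add: power2_eq_square algebra_simps abs_mult)
    qed
  qed
  also have "\<dots> = 1"
    using assms by (simp add: Bochner_Integration.integral_add psi_sq_integrable psi_norm)
  finally show "integral\<^sup>L lborel (\<lambda>x. \<bar>hermite_fun \<alpha> m x * hermite_fun \<alpha> n x\<bar>) \<le> 1" .
qed

lemma transform_psi:
  assumes g: "\<gamma> > 0" and a: "\<alpha> = 2 / \<gamma>\<^sup>2"
  shows "rbf_SB \<gamma> (hermite_fun \<alpha> n) z = e_fun \<gamma> n z"
proof -
  have ap: "\<alpha> > 0" using g a by simp
  define f where "f m x = e_fun \<gamma> m z * complex_of_real (hermite_fun \<alpha> m x * hermite_fun \<alpha> n x)" for m x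
  have fm[measurable]: "f m \<in> borel_measurable lborel" for m
    unfolding f_def[abs_def] by measurable
  have fi: "integrable lborel (f m)" for m
    unfolding f_def using psi_prod_integrable[OF ap]
    by (intro Bochner_Integration.integrable_mult_right integrable_of_real)
  have nf: "norm (f m x) = norm (e_fun \<gamma> m z) * \<bar>hermite_fun \<alpha> m x * hermite_fun \<alpha> n x\<bar>" for m x
    unfolding f_def by (simp add: norm_mult abs_mult)
  have nint: "integral\<^sup>L lborel (\<lambda>x. norm (f m x)) \<le> norm (e_fun \<gamma> m z)" for m
  proof -
    have "integral\<^sup>L lborel (\<lambda>x. norm (f m x)) = norm (e_fun \<gamma> m z) * integral\<^sup>L lborel (\<lambda>x. \<bar>hermite_fun \<alpha> m x * hermite_fun \<alpha> n x\<bar>)"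
      unfolding nf by simp
    also have "\<dots> \<le> norm (e_fun \<gamma> m z) * 1"
      by (intro mult_left_mono abs_psi_prod_int[OF ap]) simp
    finally show ?thesis by simp
  qed
  have sint: "summable (\<lambda>m. integral\<^sup>L lborel (\<lambda>x. norm (f m x)))"
    by (rule summable_comparison_test[OF _ summable_norm_e_fun[of \<gamma> z]])
       (use nint in auto)
  have ae: "AE x in lborel. summable (\<lambda>m. norm (f m x))"
  proof -
    have "(\<integral>\<^sup>+ x. (\<Sum>m. ennreal (norm (f m x))) \<partial>lborel) = (\<Sum>m. \<integral>\<^sup>+ x. ennreal (norm (f m x)) \<partial>lborel)"
      by (intro nn_integral_suminf) auto
    also have "\<dots> = (\<Sum>m. ennreal (integral\<^sup>L lborel (\<lambda>x. norm (f m x))))"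
      by (intro arg_cong[where f=suminf] ext nn_integral_eq_integral integrable_norm fi) auto
    also have "\<dots> = ennreal (\<Sum>m. integral\<^sup>L lborel (\<lambda>x. norm (f m x)))"
      by (intro suminf_ennreal2 sint) auto
    finally have "(\<integral>\<^sup>+ x. (\<Sum>m. ennreal (norm (f m x))) \<partial>lborel) \<noteq> \<infinity>" by simp
    then have "AE x in lborel. (\<Sum>m. ennreal (norm (f m x))) \<noteq> \<infinity>"
      by (intro nn_integral_PInf_AE) auto
    then show ?thesis
      by eventually_elim (auto intro: summable_suminf_not_top)
  qed
  have "rbf_SB \<gamma> (hermite_fun \<alpha> n) z = integral\<^sup>L lborel (\<lambda>x. \<Sum>m. f m x)"
    unfolding rbf_SB_def
  proof (rule integral_cong_AE)
    show "AE x in lborel. rbf_kernel \<gamma> z x * complex_of_real (hermite_fun \<alpha> n x) = (\<Sum>m. f m x)"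
      using ae
    proof eventually_elim
      case (elim x)
      show ?case
      proof (cases "hermite_fun \<alpha> n x = 0")
        case True
        then show ?thesis by (simp add: f_def)
      next
        case False
        have s: "summable (\<lambda>m. f m x)" using elim by (rule summable_norm_cancel)
        have "summable (\<lambda>m. f m x / complex_of_real (hermite_fun \<alpha> n x))"
          using s by (rule summable_divide)
        moreover have "f m x / complex_of_real (hermite_fun \<alpha> n x) = e_fun \<gamma> m z * complex_of_real (hermite_fun \<alpha> m x)" for m
          using False by (simp add: f_def)
        ultimately have s2: "summable (\<lambda>m. e_fun \<gamma> m z * complex_of_real (hermite_fun \<alpha> m x))" by simp
        show ?thesis unfolding rbf_kernel_def a[symmetric] f_def
          using suminf_mult2[OF s2, of "complex_of_real (hermite_fun \<alpha> n x)"]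
          by (simp add: mult.assoc)
      qed
    qed
  qed (unfold rbf_kernel_def, measurable)
  also have "\<dots> = (\<Sum>m. integral\<^sup>L lborel (f m))"
    by (rule integral_suminf[OF fi ae sint])
  also have "\<dots> = (\<Sum>m. if m = n then e_fun \<gamma> m z else 0)"
  proof (rule arg_cong[where f=suminf], rule ext)
    fix m
    have "integral\<^sup>L lborel (f m) = e_fun \<gamma> m z * complex_of_real (integral\<^sup>L lborel (\<lambda>x. hermite_fun \<alpha> m x * hermite_fun \<alpha> n x))"
      unfolding f_def by (simp only: integral_mult_right_zero integral_complex_of_real)
    then show "integral\<^sup>L lborel (f m) = (if m = n then e_fun \<gamma> m z else 0)"
      using psi_orth[OF ap, of m n] by simp
  qed
  also have "\<dots> = e_fun \<gamma> n z"
    using sums_single[of n "\<lambda>m. e_fun \<gamma> m z"] by (simp add: sums_iff)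
  finally show ?thesis .
qed



lemma Complex_meas: "(\<lambda>p. Complex (fst p) (snd p)) \<in> borel_measurable (lborel \<Otimes>\<^sub>M lborel)"
proof -
  have "(\<lambda>p::real\<times>real. Complex (fst p) (snd p)) = (\<lambda>p. complex_of_real (fst p) + \<i> * complex_of_real (snd p))"
    by (auto simp: complex_eq_iff)
  moreover have "(\<lambda>p::real\<times>real. complex_of_real (fst p) + \<i> * complex_of_real (snd p)) \<in> borel_measurable borel"
    by (intro borel_measurable_continuous_onI continuous_intros)
  ultimately show ?thesis
    by (simp add: measurable_lborel2 lborel_prod)
qed

lemma lborel_complex: "(lborel :: complex measure) = distr (lborel \<Otimes>\<^sub>M lborel) borel (\<lambda>p. Complex (fst p) (snd p))"
proof (rule lborel_eqI)
  fix l u :: complex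
  assume le: "\<And>b. b \<in> Basis \<Longrightarrow> l \<bullet> b \<le> u \<bullet> b"
  have r: "Re l \<le> Re u" and i: "Im l \<le> Im u" using le[of 1] le[of \<i>] by (auto simp: inner_complex_def)
  have pre: "(\<lambda>p. Complex (fst p) (snd p)) -` box l u \<inter> space (lborel \<Otimes>\<^sub>M lborel) = {Re l<..<Re u} \<times> {Im l<..<Im u}"
    by (auto simp: box_def Basis_complex_def inner_complex_def space_pair_measure)
  have "emeasure (distr (lborel \<Otimes>\<^sub>M lborel) borel (\<lambda>p. Complex (fst p) (snd p))) (box l u) =
        emeasure (lborel \<Otimes>\<^sub>M lborel) ({Re l<..<Re u} \<times> {Im l<..<Im u})"
    by (subst emeasure_distr[OF Complex_meas]) (auto simp: pre)
  also have "\<dots> = ennreal (Re u - Re l) * ennreal (Im u - Im l)"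
    using r i by (simp add: lborel.emeasure_pair_measure_Times)
  also have "\<dots> = ennreal (\<Prod>b\<in>Basis. (u - l) \<bullet> b)"
    using r i by (simp add: Basis_complex_def inner_complex_def ennreal_mult)
  finally show "emeasure (distr (lborel \<Otimes>\<^sub>M lborel) borel (\<lambda>p. Complex (fst p) (snd p))) (box l u) = (\<Prod>b\<in>Basis. (u - l) \<bullet> b)" .
qed simp

lemma nn_integral_complex:
  assumes [measurable]: "g \<in> borel_measurable (borel :: complex measure)"
  shows "(\<integral>\<^sup>+ z. g z \<partial>lborel) = (\<integral>\<^sup>+ a. (\<integral>\<^sup>+ b. g (Complex a b) \<partial>lborel) \<partial>lborel)"
proof -
  have m: "(\<lambda>p. g (Complex (fst p) (snd p))) \<in> borel_measurable (lborel \<Otimes>\<^sub>M lborel)"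
    using measurable_comp[OF Complex_meas assms] by (simp add: comp_def)
  have "(\<integral>\<^sup>+ z. g z \<partial>lborel) = (\<integral>\<^sup>+ p. g (Complex (fst p) (snd p)) \<partial>(lborel \<Otimes>\<^sub>M lborel))"
    by (subst lborel_complex) (simp add: nn_integral_distr[OF Complex_meas])
  also have "\<dots> = (\<integral>\<^sup>+ a. (\<integral>\<^sup>+ b. g (Complex a b) \<partial>lborel) \<partial>lborel)"
    using lborel.nn_integral_fst[OF m] by simp
  finally show ?thesis .
qed

lemma nn_integral_even:
  fixes f :: "real \<Rightarrow> ennreal"
  assumes [measurable]: "f \<in> borel_measurable borel" and ev: "\<And>x. f (- x) = f x"
  shows "(\<integral>\<^sup>+ x. f x \<partial>lborel) = 2 * (\<integral>\<^sup>+ x. f x * indicator {0..} x \<partial>lborel)"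
proof -
  have "(\<integral>\<^sup>+ x. f x \<partial>lborel) = (\<integral>\<^sup>+ x. f x * indicator {0..} x + f x * indicator {..<0} x \<partial>lborel)"
    by (intro nn_integral_cong) (auto split: split_indicator)
  also have "\<dots> = (\<integral>\<^sup>+ x. f x * indicator {0..} x \<partial>lborel) + (\<integral>\<^sup>+ x. f x * indicator {..<0} x \<partial>lborel)"
    by (rule nn_integral_add) auto
  also have "(\<integral>\<^sup>+ x. f x * indicator {..<0} x \<partial>lborel) = (\<integral>\<^sup>+ x. f (0 + (-1) * x) * indicator {..<0} (0 + (-1) * x) \<partial>lborel)"
    by (subst nn_integral_real_affine[where c="-1" and t=0]) auto
  also have "\<dots> = (\<integral>\<^sup>+ x. f x * indicator {0..} x \<partial>lborel)"
    by (intro nn_integral_cong_AE AE_I[where N="{0}"]) (auto simp: ev split: split_indicator)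
  finally show ?thesis by (simp add: mult_2)
qed

lemma odd_moment_base:
  "(\<integral>\<^sup>+ x. ennreal (x ^ (2 * n + 1) * exp (- x\<^sup>2)) * indicator {0..} x \<partial>lborel) = ennreal (fact n / 2)"
proof -
  have hb: "has_bochner_integral lborel (\<lambda>x::real. indicator {0..} x *\<^sub>R (exp (-x\<^sup>2)*x^(2 * n + 1))) (fact n / 2)"
    by (rule gaussian_moment_odd_pos)
  have "(\<integral>\<^sup>+ x. ennreal (indicator {0..} x *\<^sub>R (exp (-x\<^sup>2)*x^(2 * n + 1))) \<partial>lborel) =
        ennreal (integral\<^sup>L lborel (\<lambda>x::real. indicator {0..} x *\<^sub>R (exp (-x\<^sup>2)*x^(2 * n + 1))))"
    using hb by (intro nn_integral_eq_integral) (auto simp: has_bochner_integral_iff split: split_indicator)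
  also have "\<dots> = ennreal (fact n / 2)" by (simp only: has_bochner_integral_integral_eq[OF hb])
  finally show ?thesis
    by (subst (asm) nn_integral_cong[where v = "\<lambda>x. ennreal (x ^ (2 * n + 1) * exp (- x\<^sup>2)) * indicator {0..} x"])
       (auto split: split_indicator simp: mult.commute)
qed

lemma ennreal_mult3: "0 \<le> (a::real) \<Longrightarrow> 0 \<le> b \<Longrightarrow> 0 \<le> c \<Longrightarrow> 2 * (ennreal a * (ennreal b * ennreal c)) = ennreal (2 * a * b * c)"
  by (simp add: ennreal_mult mult.assoc)

lemma odd_moment:
  assumes s: "s > 0"
  shows "(\<integral>\<^sup>+ a. ennreal (\<bar>a\<bar> ^ (2 * n + 1) * exp (- s * a\<^sup>2)) \<partial>lborel) = ennreal (fact n / s ^ (n + 1))"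
proof -
  have ss: "sqrt s > 0" using s by simp
  have "(\<integral>\<^sup>+ a. ennreal (\<bar>a\<bar> ^ (2 * n + 1) * exp (- s * a\<^sup>2)) \<partial>lborel) =
     2 * (\<integral>\<^sup>+ a. ennreal (\<bar>a\<bar> ^ (2 * n + 1) * exp (- s * a\<^sup>2)) * indicator {0..} a \<partial>lborel)"
    by (rule nn_integral_even) auto
  also have "(\<integral>\<^sup>+ a. ennreal (\<bar>a\<bar> ^ (2 * n + 1) * exp (- s * a\<^sup>2)) * indicator {0..} a \<partial>lborel) =
     ennreal (1 / sqrt s) * (\<integral>\<^sup>+ x. ennreal (\<bar>0 + (1 / sqrt s) * x\<bar> ^ (2 * n + 1) * exp (- s * (0 + (1 / sqrt s) * x)\<^sup>2)) * indicator {0..} (0 + (1 / sqrt s) * x) \<partial>lborel)"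
    using ss by (subst nn_integral_real_affine[where c = "1 / sqrt s" and t = 0]) auto
  also have "(\<integral>\<^sup>+ x. ennreal (\<bar>0 + (1 / sqrt s) * x\<bar> ^ (2 * n + 1) * exp (- s * (0 + (1 / sqrt s) * x)\<^sup>2)) * indicator {0..} (0 + (1 / sqrt s) * x) \<partial>lborel)
     = (\<integral>\<^sup>+ x. ennreal (1 / sqrt s ^ (2 * n + 1)) * (ennreal (x ^ (2 * n + 1) * exp (- x\<^sup>2)) * indicator {0..} x) \<partial>lborel)"
  proof (intro nn_integral_cong)
    fix x :: real
    show "ennreal (\<bar>0 + (1 / sqrt s) * x\<bar> ^ (2 * n + 1) * exp (- s * (0 + (1 / sqrt s) * x)\<^sup>2)) * indicator {0..} (0 + (1 / sqrt s) * x)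
       = ennreal (1 / sqrt s ^ (2 * n + 1)) * (ennreal (x ^ (2 * n + 1) * exp (- x\<^sup>2)) * indicator {0..} x)"
    proof (cases "x \<ge> 0")
      case True
      have e1: "\<bar>0 + (1 / sqrt s) * x\<bar> ^ (2 * n + 1) * exp (- s * (0 + (1 / sqrt s) * x)\<^sup>2) =
            (1 / sqrt s ^ (2 * n + 1)) * (x ^ (2 * n + 1) * exp (- x\<^sup>2))"
        using True ss s by (simp add: power_mult_distrib power_divide abs_mult)
      have e2: "ennreal (1 / sqrt s ^ (2 * n + 1)) * ennreal (x ^ (2 * n + 1) * exp (- x\<^sup>2)) =
           ennreal ((1 / sqrt s ^ (2 * n + 1)) * (x ^ (2 * n + 1) * exp (- x\<^sup>2)))"
        by (rule ennreal_mult'[symmetric]) (use ss in simp)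
      have i1: "indicator {0..} x = (1::ennreal)" using True by simp
      have i2: "indicator {0..} (0 + (1 / sqrt s) * x) = (1::ennreal)" using True ss by simp
      show ?thesis by (simp only: i1 i2 mult_1_right e1 e2)
    next
      case False
      have i: "indicator {0..} (0 + (1/sqrt s) * x) = (0::ennreal)" "indicator {0..} x = (0::ennreal)"
        using False ss by (auto simp: zero_le_divide_iff)
      show ?thesis by (simp only: i mult_zero_right)
    qed
  qed
  also have "\<dots> = ennreal (1 / sqrt s ^ (2 * n + 1)) * ennreal (fact n / 2)"
    using odd_moment_base[of n] by (subst nn_integral_cmult) auto
  also have "2 * (ennreal (1 / sqrt s) * (ennreal (1 / sqrt s ^ (2 * n + 1)) * ennreal (fact n / 2))) =
      ennreal (2 * (1 / sqrt s) * (1 / sqrt s ^ (2 * n + 1)) * (fact n / 2))"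
    using ss by (intro ennreal_mult3) auto
  also have "2 * (1 / sqrt s) * (1 / sqrt s ^ (2 * n + 1)) * (fact n / 2) = fact n / s ^ (n + 1)"
  proof -
    have "sqrt s * sqrt s ^ (2 * n + 1) = sqrt s ^ (2 * (n + 1))" by (simp add: power_add)
    also have "\<dots> = (sqrt s ^ 2) ^ (n + 1)" by (rule power_mult)
    also have "\<dots> = s ^ (n + 1)" using s by simp
    finally have "sqrt s * sqrt s ^ (2 * n + 1) = s ^ (n + 1)" .
    then show ?thesis using ss by (simp add: field_simps)
  qed
  finally show ?thesis .
qed

lemma arctan_nn_integral: "(\<integral>\<^sup>+ t. ennreal (1 / (1 + t\<^sup>2)) \<partial>lborel) = ennreal pi"
proof -
  have "(\<integral>\<^sup>+ t. ennreal (1 / (1 + t\<^sup>2)) \<partial>lborel) = 2 * (\<integral>\<^sup>+ t. ennreal (1 / (1 + t\<^sup>2)) * indicator {0..} t \<partial>lborel)"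
    by (rule nn_integral_even) auto
  also have "(\<integral>\<^sup>+ t. ennreal (1 / (1 + t\<^sup>2)) * indicator {0..} t \<partial>lborel) = ennreal (pi / 2 - arctan 0)"
  proof (rule nn_integral_FTC_atLeast)
    show "((\<lambda>a. arctan a) \<longlongrightarrow> pi / 2) at_top" by (rule tendsto_arctan_at_top)
  qed (auto intro!: derivative_eq_intros simp: add_nonneg_eq_0_iff field_simps power2_eq_square)
  also have "2 * ennreal (pi / 2 - arctan 0) = ennreal pi"
    by (simp flip: ennreal_numeral ennreal_mult)
  finally show ?thesis .
qed

lemma aux_div: "(k::real) > 0 \<Longrightarrow> u > 0 \<Longrightarrow> F / (k * u) ^ (n + 1) * u ^ n = F / k ^ (n + 1) * (1 / u)"
  by (simp add: power_mult_distrib field_simps)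

lemma radial_moment:
  assumes k: "k > 0"
  shows "(\<integral>\<^sup>+ a. (\<integral>\<^sup>+ b. ennreal ((a\<^sup>2 + b\<^sup>2) ^ n * exp (- k * (a\<^sup>2 + b\<^sup>2))) \<partial>lborel) \<partial>lborel)
     = ennreal (pi * fact n / k ^ (n + 1))"
proof -
  define q where "q a t = ennreal (\<bar>a\<bar> ^ (2 * n + 1) * exp (- (k * (1 + t\<^sup>2)) * a\<^sup>2)) * ennreal ((1 + t\<^sup>2) ^ n)" for a t :: real
  have qm[measurable]: "case_prod q \<in> borel_measurable (lborel \<Otimes>\<^sub>M lborel)"
    unfolding q_def[abs_def] by measurable
  have step1: "(\<integral>\<^sup>+ b. ennreal ((a\<^sup>2 + b\<^sup>2) ^ n * exp (- k * (a\<^sup>2 + b\<^sup>2))) \<partial>lborel) = (\<integral>\<^sup>+ t. q a t \<partial>lborel)"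
    if a: "a \<noteq> 0" for a
  proof -
    have "(\<integral>\<^sup>+ b. ennreal ((a\<^sup>2 + b\<^sup>2) ^ n * exp (- k * (a\<^sup>2 + b\<^sup>2))) \<partial>lborel) =
        ennreal \<bar>a\<bar> * (\<integral>\<^sup>+ t. ennreal ((a\<^sup>2 + (0 + a * t)\<^sup>2) ^ n * exp (- k * (a\<^sup>2 + (0 + a * t)\<^sup>2))) \<partial>lborel)"
      using a by (subst nn_integral_real_affine[where c = a and t = 0]) auto
    also have "\<dots> = (\<integral>\<^sup>+ t. ennreal \<bar>a\<bar> * ennreal ((a\<^sup>2 + (0 + a * t)\<^sup>2) ^ n * exp (- k * (a\<^sup>2 + (0 + a * t)\<^sup>2))) \<partial>lborel)"
      by (rule nn_integral_cmult[symmetric]) measurable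
    also have "\<dots> = (\<integral>\<^sup>+ t. q a t \<partial>lborel)"
    proof (rule nn_integral_cong)
      fix t :: real
      have "\<bar>a\<bar> * ((a\<^sup>2 + (0 + a * t)\<^sup>2) ^ n * exp (- k * (a\<^sup>2 + (0 + a * t)\<^sup>2))) =
            (\<bar>a\<bar> ^ (2 * n + 1) * exp (- (k * (1 + t\<^sup>2)) * a\<^sup>2)) * ((1 + t\<^sup>2) ^ n)"
      proof -
        have e1: "a\<^sup>2 + (0 + a * t)\<^sup>2 = \<bar>a\<bar>\<^sup>2 * (1 + t\<^sup>2)" by (simp add: power2_eq_square algebra_simps)
        have e2: "(\<bar>a\<bar>\<^sup>2) ^ n = \<bar>a\<bar> ^ (2 * n)" by (simp add: power_mult)
        have e3: "exp (- k * (\<bar>a\<bar>\<^sup>2 * (1 + t\<^sup>2))) = exp (- (k * (1 + t\<^sup>2)) * a\<^sup>2)" by (simp add: algebra_simps)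
        show ?thesis unfolding e1 power_mult_distrib e2 e3 by (simp add: algebra_simps)
      qed
      then show "ennreal \<bar>a\<bar> * ennreal ((a\<^sup>2 + (0 + a * t)\<^sup>2) ^ n * exp (- k * (a\<^sup>2 + (0 + a * t)\<^sup>2))) = q a t"
        unfolding q_def by (simp add: ennreal_mult[symmetric])
    qed
    finally show ?thesis .
  qed
  have "(\<integral>\<^sup>+ a. (\<integral>\<^sup>+ b. ennreal ((a\<^sup>2 + b\<^sup>2) ^ n * exp (- k * (a\<^sup>2 + b\<^sup>2))) \<partial>lborel) \<partial>lborel)
      = (\<integral>\<^sup>+ a. (\<integral>\<^sup>+ t. q a t \<partial>lborel) \<partial>lborel)"
    by (rule nn_integral_cong_AE) (use AE_lborel_singleton[of 0] step1 in \<open>auto elim!: eventually_mono\<close>)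
  also have "\<dots> = (\<integral>\<^sup>+ t. (\<integral>\<^sup>+ a. q a t \<partial>lborel) \<partial>lborel)"
    by (rule lborel_pair.Fubini'[symmetric]) (rule qm)
  also have "\<dots> = (\<integral>\<^sup>+ t. ennreal (fact n / k ^ (n + 1)) * ennreal (1 / (1 + t\<^sup>2)) \<partial>lborel)"
  proof (rule nn_integral_cong)
    fix t :: real
    have s: "k * (1 + t\<^sup>2) > 0" using k by (simp add: add_pos_nonneg)
    have "(\<integral>\<^sup>+ a. q a t \<partial>lborel) = (\<integral>\<^sup>+ a. ennreal (\<bar>a\<bar> ^ (2 * n + 1) * exp (- (k * (1 + t\<^sup>2)) * a\<^sup>2)) \<partial>lborel) * ennreal ((1 + t\<^sup>2) ^ n)"
      unfolding q_def by (rule nn_integral_multc) measurable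
    also have "\<dots> = ennreal (fact n / (k * (1 + t\<^sup>2)) ^ (n + 1)) * ennreal ((1 + t\<^sup>2) ^ n)"
      by (simp only: odd_moment[OF s])
    also have "\<dots> = ennreal (fact n / (k * (1 + t\<^sup>2)) ^ (n + 1) * (1 + t\<^sup>2) ^ n)"
      by (rule ennreal_mult'[symmetric]) (use s in auto)
    also have "fact n / (k * (1 + t\<^sup>2)) ^ (n + 1) * (1 + t\<^sup>2) ^ n = fact n / k ^ (n + 1) * (1 / (1 + t\<^sup>2))"
      using k by (intro aux_div) (auto simp: add_pos_nonneg)
    also have "ennreal \<dots> = ennreal (fact n / k ^ (n + 1)) * ennreal (1 / (1 + t\<^sup>2))"
      by (rule ennreal_mult') (use k in auto)
    finally show "(\<integral>\<^sup>+ a. q a t \<partial>lborel) = ennreal (fact n / k ^ (n + 1)) * ennreal (1 / (1 + t\<^sup>2))" .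
  qed
  also have "\<dots> = ennreal (fact n / k ^ (n + 1)) * ennreal pi"
    by (subst nn_integral_cmult) (auto simp: arctan_nn_integral)
  also have "\<dots> = ennreal (pi * fact n / k ^ (n + 1))"
    using k by (simp add: ennreal_mult[symmetric] mult.commute)
  finally show ?thesis .
qed



lemma H_weight_eq: "H_weight \<gamma> z = exp (- 4 * (Im z)\<^sup>2 / \<gamma>\<^sup>2)"
proof -
  have "(z - cnj z)\<^sup>2 / complex_of_real (\<gamma>\<^sup>2) = complex_of_real (- 4 * (Im z)\<^sup>2 / \<gamma>\<^sup>2)"
    by (simp add: complex_eq_iff power2_eq_square)
  then show ?thesis unfolding H_weight_def by (simp only: exp_of_real Re_complex_of_real)
qed

lemma exp_comb_aux: "- 2 * (R\<^sup>2 - I\<^sup>2) / \<gamma>\<^sup>2 + - 4 * I\<^sup>2 / \<gamma>\<^sup>2 = - (2 / \<gamma>\<^sup>2) * (R\<^sup>2 + (I::real)\<^sup>2)"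
  by (simp add: add_divide_distrib[symmetric] algebra_simps)

lemma G_formula:
  "(cmod (e_fun \<gamma> n z))\<^sup>2 * H_weight \<gamma> z =
   (2 ^ n / (\<gamma> ^ (2 * n) * fact n)) * (((Re z)\<^sup>2 + (Im z)\<^sup>2) ^ n * exp (- (2 / \<gamma>\<^sup>2) * ((Re z)\<^sup>2 + (Im z)\<^sup>2)))"
proof -
  have c: "(sqrt (2 ^ n / (\<gamma> ^ (2 * n) * fact n)))\<^sup>2 = 2 ^ n / (\<gamma> ^ (2 * n) * fact n)"
    by (simp add: zero_le_divide_iff)
  have z: "(cmod z ^ n)\<^sup>2 = ((Re z)\<^sup>2 + (Im z)\<^sup>2) ^ n"
  proof -
    have "(cmod z ^ n)\<^sup>2 = (cmod z ^ 2) ^ n" by (metis power_mult mult.commute)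
    then show ?thesis by (simp only: cmod_power2)
  qed
  have ex: "(cmod (exp (- z\<^sup>2 / complex_of_real (\<gamma>\<^sup>2))))\<^sup>2 = exp (- 2 * ((Re z)\<^sup>2 - (Im z)\<^sup>2) / \<gamma>\<^sup>2)"
  proof -
    have r: "Re (- z\<^sup>2 / complex_of_real (\<gamma>\<^sup>2)) = - ((Re z)\<^sup>2 - (Im z)\<^sup>2) / \<gamma>\<^sup>2"
    proof -
      have a1: "Re (- z\<^sup>2 / complex_of_real (\<gamma>\<^sup>2)) = Re (- z\<^sup>2) / \<gamma>\<^sup>2" by (rule Re_divide_of_real)
      have a2: "Re (- z\<^sup>2) = - ((Re z)\<^sup>2 - (Im z)\<^sup>2)" by (simp add: power2_eq_square)
      show ?thesis by (simp only: a1 a2)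
    qed
    have "(cmod (exp (- z\<^sup>2 / complex_of_real (\<gamma>\<^sup>2))))\<^sup>2 = exp (Re (- z\<^sup>2 / complex_of_real (\<gamma>\<^sup>2))) * exp (Re (- z\<^sup>2 / complex_of_real (\<gamma>\<^sup>2)))"
      by (simp only: norm_exp_eq_Re power2_eq_square)
    also have "\<dots> = exp (- 2 * ((Re z)\<^sup>2 - (Im z)\<^sup>2) / \<gamma>\<^sup>2)"
      unfolding r exp_add[symmetric] by (simp add: add_divide_distrib[symmetric])
    finally show ?thesis .
  qed
  have "(cmod (e_fun \<gamma> n z))\<^sup>2 = (sqrt (2 ^ n / (\<gamma> ^ (2 * n) * fact n)))\<^sup>2 * (cmod z ^ n)\<^sup>2 *
      (cmod (exp (- z\<^sup>2 / complex_of_real (\<gamma>\<^sup>2))))\<^sup>2"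
    unfolding e_fun_def by (simp only: norm_mult norm_of_real norm_power power_mult_distrib power2_abs)
  also have "\<dots> = 2 ^ n / (\<gamma> ^ (2 * n) * fact n) * ((Re z)\<^sup>2 + (Im z)\<^sup>2) ^ n * exp (- 2 * ((Re z)\<^sup>2 - (Im z)\<^sup>2) / \<gamma>\<^sup>2)"
    by (simp only: c z ex)
  finally have E: "(cmod (e_fun \<gamma> n z))\<^sup>2 = 2 ^ n / (\<gamma> ^ (2 * n) * fact n) * ((Re z)\<^sup>2 + (Im z)\<^sup>2) ^ n * exp (- 2 * ((Re z)\<^sup>2 - (Im z)\<^sup>2) / \<gamma>\<^sup>2)" .
  have "(cmod (e_fun \<gamma> n z))\<^sup>2 * H_weight \<gamma> z =
     2 ^ n / (\<gamma> ^ (2 * n) * fact n) * (((Re z)\<^sup>2 + (Im z)\<^sup>2) ^ n * (exp (- 2 * ((Re z)\<^sup>2 - (Im z)\<^sup>2) / \<gamma>\<^sup>2) * exp (- 4 * (Im z)\<^sup>2 / \<gamma>\<^sup>2)))"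
    by (simp only: E H_weight_eq mult.assoc)
  also have "exp (- 2 * ((Re z)\<^sup>2 - (Im z)\<^sup>2) / \<gamma>\<^sup>2) * exp (- 4 * (Im z)\<^sup>2 / \<gamma>\<^sup>2) = exp (- (2 / \<gamma>\<^sup>2) * ((Re z)\<^sup>2 + (Im z)\<^sup>2))"
    by (simp only: exp_add[symmetric] exp_comb_aux)
  finally show ?thesis .
qed

lemma const_eq: "\<gamma> > 0 \<Longrightarrow> 2 ^ n / (\<gamma> ^ (2 * n) * fact n) * (pi * fact n / (2 / \<gamma>\<^sup>2) ^ (n + 1)) = pi * \<gamma>\<^sup>2 / 2"
proof -
  assume g: "\<gamma> > 0"
  have "(2 / \<gamma>\<^sup>2) ^ (n + 1) = 2 ^ n * 2 / (\<gamma> ^ (2 * n) * \<gamma>\<^sup>2)"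
    by (simp add: power_divide power_mult[symmetric] power_add mult.commute)
  then show ?thesis using g by (simp add: field_simps)
qed

lemma H_integral:
  assumes g: "\<gamma> > 0"
  shows "has_bochner_integral lborel (\<lambda>z. (cmod (e_fun \<gamma> n z))\<^sup>2 * H_weight \<gamma> z) (pi * \<gamma>\<^sup>2 / 2)"
proof -
  define c where "c = 2 ^ n / (\<gamma> ^ (2 * n) * fact n)"
  define k where "k = 2 / \<gamma>\<^sup>2"
  have c0: "c \<ge> 0" unfolding c_def by simp
  have k0: "k > 0" unfolding k_def using g by simp
  have eqf: "(\<lambda>z. (cmod (e_fun \<gamma> n z))\<^sup>2 * H_weight \<gamma> z) =
     (\<lambda>z. c * (((Re z)\<^sup>2 + (Im z)\<^sup>2) ^ n * exp (- k * ((Re z)\<^sup>2 + (Im z)\<^sup>2))))"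
    unfolding c_def k_def by (rule ext) (rule G_formula)
  have "(\<integral>\<^sup>+ z. ennreal (c * (((Re z)\<^sup>2 + (Im z)\<^sup>2) ^ n * exp (- k * ((Re z)\<^sup>2 + (Im z)\<^sup>2)))) \<partial>lborel)
     = (\<integral>\<^sup>+ a. (\<integral>\<^sup>+ b. ennreal (c * ((a\<^sup>2 + b\<^sup>2) ^ n * exp (- k * (a\<^sup>2 + b\<^sup>2)))) \<partial>lborel) \<partial>lborel)"
    by (subst nn_integral_complex) auto
  also have "\<dots> = (\<integral>\<^sup>+ a. ennreal c * (\<integral>\<^sup>+ b. ennreal ((a\<^sup>2 + b\<^sup>2) ^ n * exp (- k * (a\<^sup>2 + b\<^sup>2))) \<partial>lborel) \<partial>lborel)"
    using c0 by (intro nn_integral_cong) (subst nn_integral_cmult[symmetric], auto simp: ennreal_mult)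
  also have "\<dots> = ennreal c * (\<integral>\<^sup>+ a. (\<integral>\<^sup>+ b. ennreal ((a\<^sup>2 + b\<^sup>2) ^ n * exp (- k * (a\<^sup>2 + b\<^sup>2))) \<partial>lborel) \<partial>lborel)"
    by (rule nn_integral_cmult) measurable
  also have "\<dots> = ennreal c * ennreal (pi * fact n / k ^ (n + 1))"
    by (simp only: radial_moment[OF k0])
  also have "\<dots> = ennreal (pi * \<gamma>\<^sup>2 / 2)"
    using c0 const_eq[OF g, of n] unfolding c_def k_def by (simp flip: ennreal_mult)
  finally have nn: "(\<integral>\<^sup>+ z. ennreal (c * (((Re z)\<^sup>2 + (Im z)\<^sup>2) ^ n * exp (- k * ((Re z)\<^sup>2 + (Im z)\<^sup>2)))) \<partial>lborel) = ennreal (pi * \<gamma>\<^sup>2 / 2)" .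
  show ?thesis unfolding eqf
    by (rule has_bochner_integral_nn_integral[OF _ _ _ nn]) (use c0 in auto)
qed

lemma e_fun_holo: "\<gamma> > 0 \<Longrightarrow> e_fun \<gamma> n holomorphic_on UNIV"
  unfolding e_fun_def[abs_def] by (intro holomorphic_intros) auto

theorem mainTheorem11:
  fixes \<gamma> \<alpha> :: real and n :: nat
  assumes "\<gamma> > 0" and "\<alpha> = 2 / \<gamma>\<^sup>2"
  shows "(\<forall>z. rbf_SB \<gamma> (hermite_fun \<alpha> n) z = e_fun \<gamma> n z)
    \<and> rbf_SB \<gamma> (hermite_fun \<alpha> n) \<in> H_space \<gamma>
    \<and> H_norm \<gamma> (rbf_SB \<gamma> (hermite_fun \<alpha> n)) = L2_norm_real (hermite_fun \<alpha> n)
    \<and> L2_norm_real (hermite_fun \<alpha> n) = 1"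
proof -
  have ap: "\<alpha> > 0" using assms by simp
  have e: "rbf_SB \<gamma> (hermite_fun \<alpha> n) = e_fun \<gamma> n"
    using transform_psi[OF assms] by (rule ext)
  have hb: "has_bochner_integral lborel (\<lambda>z. (cmod (e_fun \<gamma> n z))\<^sup>2 * H_weight \<gamma> z) (pi * \<gamma>\<^sup>2 / 2)"
    using H_integral[OF assms(1)] .
  have L2: "L2_norm_real (hermite_fun \<alpha> n) = 1"
    unfolding L2_norm_real_def using psi_norm[OF ap, of n] by simp
  have Hn: "H_norm \<gamma> (e_fun \<gamma> n) = 1"
    unfolding H_norm_def using has_bochner_integral_integral_eq[OF hb] assms(1) by simp
  have Hs: "e_fun \<gamma> n \<in> H_space \<gamma>"
    unfolding H_space_def using e_fun_holo[OF assms(1)] hb by (simp add: has_bochner_integral_iff)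
  show ?thesis using e L2 Hn Hs transform_psi[OF assms] by simp
qed

end
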